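(* Let $\pi_0$ be a policy, $\epsilon\in(0,1)$, $\lambda>0$, and let $\pi^*(a|s)=\left(1+\epsilon\tanh(\tilde A_{\pi_0}(s,a)/(2\lambda))\right)\pi_0(a|s)$ with $\tilde A_{\pi_0}(s,a)=Q_{\pi_0}(s,a)-\mu_{\pi_0}(s)$, where $\mu_{\pi_0}(s)$ satisfies $\mathbb{E}_{a\sim\pi_0(\cdot|s)}[\tanh(\tilde A_{\pi_0}(s,a)/(2\lambda))]=0$ for each $s$. For a policy $\pi_\theta$ define $$D^{TV}_\theta(s)=\mathbb{E}_{a\sim\pi_0(\cdot|s)}\left[\left|\frac{\pi^*(a|s)}{\pi_0(a|s)}-\frac{\pi_\theta(a|s)}{\pi_0(a|s)}\right|\right],\quad D^{ATV}_\theta(s)=\mathbb{E}_{a\sim\pi_0(\cdot|s)}\left[\left|\frac{\pi^*(a|s)}{\pi_0(a|s)}-\frac{\pi_\theta(a|s)}{\pi_0(a|s)}\right||A_{\pi_0}(s,a)|\right],$$ $J^{ATV}(\theta)=\mathbb{E}_{s\sim d_{\pi_0}}[D^{ATV}_\theta(s)]$, $J^{TV}(\theta)=\mathbb{E}_{s\sim d_{\pi_0}}[D^{TV}_\theta(s)]$, $D^{ATV}_{\max}=\max_sD^{ATV}_\theta(s)$, $D^{TV}_{\max}=\max_sD^{TV}_\theta(s)$, $$B=\mathbb{E}_{s\sim d_{\pi^*},a\sim\pi_0(\cdot|s)}\left[\tanh\!\left(\frac{\tilde A_{\pi_0}}{2\lambda}\right)\tilde A_{\pi_0}\right],\qquad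 \tilde\delta=\max_s\mathbb{E}_{a\sim\pi_0(\cdot|s)}\left[\tanh\!\left(\frac{\tilde A_{\pi_0}}{2\lambda}\right)\tilde A_{\pi_0}\right],$$ where $\tilde A_{\pi_0}$ abbreviates $\tilde A_{\pi_0}(s,a)$. Then $$\eta(\pi_\theta)\ge\eta(\pi_0)+\epsilon B-J^{ATV}(\theta)-\frac{\gamma D^{ATV}_{\max}}{1-\gamma}J^{TV}(\theta)-\frac{\gamma\epsilon D^{ATV}_{\max}}{(1-\gamma)^2}-\frac{\gamma\epsilon\tilde\delta D^{TV}_{\max}}{(1-\gamma)^2}.$$
   Context: Infinite-horizon discounted MDP $(\mathcal S,\mathcal A,P,r,d_0,\gamma)$ with transition kernel $P(s'|s,a)$, reward $r(s,a,s')$, initial distribution $d_0$, discount $\gamma\in(0,1)$. Policies $\pi(\cdot|s)$; $\eta(\pi)=\mathbb{E}[\sum_{t\ge0}\gamma^t r(s_t,a_t,s_{t+1})]$ with $s_0\sim d_0$, $a_t\sim\pi(\cdot|s_t)$, $s_{t+1}\sim P(\cdot|s_t,a_t)$; $d_\pi(s)=\sum_{t\ge0}\gamma^t\Pr(s_t=s)$ (unnormalized discounted visitation); $V_\pi,Q_\pi$ the usual value functions, $A_\pi=Q_\pi-V_\pi$. The policy $\pi^*$ above is the optimal policy of $\max_\pi L_{\pi_0}(\pi)-\lambda\mathbb{E}_{s\sim d_{\pi_0},a\sim\pi_0}[H(\pi/\pi_0)]$, $L_{\pi_0}(\pi)=\eta(\pi_0)+\mathbb{E}_{s\sim d_{\pi_0},a\sim\pi_0}[\frac{\pi}{\pi_0}A_{\pi_0}]$,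 $H(\rho)=(\rho-1+\epsilon)\log(\rho-1+\epsilon)+(1+\epsilon-\rho)\log(1+\epsilon-\rho)$. *)

theory Defs
  imports "HOL-Analysis.Analysis"
begin

text \<open>Finite discounted MDP. States 's and actions 'a range over finite types.
  P s a s' = transition probability, r s a s' = reward, d0 = initial distribution,
  policies p s a = p(a|s).\<close>

definition is_policy :: "('s::finite \<Rightarrow> 'a::finite \<Rightarrow> real) \<Rightarrow> bool" where
  "is_policy p \<longleftrightarrow> (\<forall>s a. 0 \<le> p s a) \<and> (\<forall>s. (\<Sum>a\<in>UNIV. p s a) = 1)"

definition is_kernel :: "('s::finite \<Rightarrow> 'a::finite \<Rightarrow> 's \<Rightarrow> real) \<Rightarrow> bool" where
  "is_kernel P \<longleftrightarrow> (\<forall>s a s'. 0 \<le> P s a s') \<and> (\<forall>s a. (\<Sum>s'\<in>UNIV. P s a s') = 1)"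

definition is_distribution :: "('s::finite \<Rightarrow> real) \<Rightarrow> bool" where
  "is_distribution d \<longleftrightarrow> (\<forall>s. 0 \<le> d s) \<and> (\<Sum>s\<in>UNIV. d s) = 1"

primrec state_dist ::
  "('s::finite \<Rightarrow> 'a::finite \<Rightarrow> 's \<Rightarrow> real) \<Rightarrow> ('s \<Rightarrow> real) \<Rightarrow> ('s \<Rightarrow> 'a \<Rightarrow> real) \<Rightarrow> nat \<Rightarrow> 's \<Rightarrow> real"
where
  "state_dist P d0 p 0 = d0"
| "state_dist P d0 p (Suc t) =
     (\<lambda>s'. \<Sum>s\<in>UNIV. \<Sum>a\<in>UNIV. state_dist P d0 p t s * p s a * P s a s')"

text \<open>Unnormalized discounted visitation d_pi(s) = sum_t gamma^t Pr(s_t = s).\<close>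
definition visitation ::
  "('s::finite \<Rightarrow> 'a::finite \<Rightarrow> 's \<Rightarrow> real) \<Rightarrow> ('s \<Rightarrow> real) \<Rightarrow> real \<Rightarrow> ('s \<Rightarrow> 'a \<Rightarrow> real) \<Rightarrow> 's \<Rightarrow> real"
where
  "visitation P d0 \<gamma> p s = (\<Sum>t. \<gamma> ^ t * state_dist P d0 p t s)"

definition exp_reward ::
  "('s::finite \<Rightarrow> 'a::finite \<Rightarrow> 's \<Rightarrow> real) \<Rightarrow> ('s \<Rightarrow> 'a \<Rightarrow> 's \<Rightarrow> real) \<Rightarrow> ('s \<Rightarrow> 'a \<Rightarrow> real) \<Rightarrow> 's \<Rightarrow> real"
where
  "exp_reward P r p s = (\<Sum>a\<in>UNIV. p s a * (\<Sum>s'\<in>UNIV. P s a s' * r s a s'))"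

definition eta ::
  "('s::finite \<Rightarrow> 'a::finite \<Rightarrow> 's \<Rightarrow> real) \<Rightarrow> ('s \<Rightarrow> 'a \<Rightarrow> 's \<Rightarrow> real) \<Rightarrow> ('s \<Rightarrow> real) \<Rightarrow> real
     \<Rightarrow> ('s \<Rightarrow> 'a \<Rightarrow> real) \<Rightarrow> real"
where
  "eta P r d0 \<gamma> p = (\<Sum>t. \<gamma> ^ t * (\<Sum>s\<in>UNIV. state_dist P d0 p t s * exp_reward P r p s))"

definition Vf ::
  "('s::finite \<Rightarrow> 'a::finite \<Rightarrow> 's \<Rightarrow> real) \<Rightarrow> ('s \<Rightarrow> 'a \<Rightarrow> 's \<Rightarrow> real) \<Rightarrow> real
     \<Rightarrow> ('s \<Rightarrow> 'a \<Rightarrow> real) \<Rightarrow> 's \<Rightarrow> real"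
where
  "Vf P r \<gamma> p s = eta P r (\<lambda>s'. if s' = s then 1 else 0) \<gamma> p"

definition Qf ::
  "('s::finite \<Rightarrow> 'a::finite \<Rightarrow> 's \<Rightarrow> real) \<Rightarrow> ('s \<Rightarrow> 'a \<Rightarrow> 's \<Rightarrow> real) \<Rightarrow> real
     \<Rightarrow> ('s \<Rightarrow> 'a \<Rightarrow> real) \<Rightarrow> 's \<Rightarrow> 'a \<Rightarrow> real"
where
  "Qf P r \<gamma> p s a = (\<Sum>s'\<in>UNIV. P s a s' * (r s a s' + \<gamma> * Vf P r \<gamma> p s'))"

definition Af ::
  "('s::finite \<Rightarrow> 'a::finite \<Rightarrow> 's \<Rightarrow> real) \<Rightarrow> ('s \<Rightarrow> 'a \<Rightarrow> 's \<Rightarrow> real) \<Rightarrow> real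
     \<Rightarrow> ('s \<Rightarrow> 'a \<Rightarrow> real) \<Rightarrow> 's \<Rightarrow> 'a \<Rightarrow> real"
where
  "Af P r \<gamma> p s a = Qf P r \<gamma> p s a - Vf P r \<gamma> p s"

definition Atilde ::
  "('s::finite \<Rightarrow> 'a::finite \<Rightarrow> 's \<Rightarrow> real) \<Rightarrow> ('s \<Rightarrow> 'a \<Rightarrow> 's \<Rightarrow> real) \<Rightarrow> real
     \<Rightarrow> ('s \<Rightarrow> 'a \<Rightarrow> real) \<Rightarrow> ('s \<Rightarrow> real) \<Rightarrow> 's \<Rightarrow> 'a \<Rightarrow> real"
where
  "Atilde P r \<gamma> p0 \<mu> s a = Qf P r \<gamma> p0 s a - \<mu> s"

definition pi_star ::
  "('s::finite \<Rightarrow> 'a::finite \<Rightarrow> 's \<Rightarrow> real) \<Rightarrow> ('s \<Rightarrow> 'a \<Rightarrow> 's \<Rightarrow> real) \<Rightarrow> real \<Rightarrow> real \<Rightarrow> real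
     \<Rightarrow> ('s \<Rightarrow> 'a \<Rightarrow> real) \<Rightarrow> ('s \<Rightarrow> real) \<Rightarrow> 's \<Rightarrow> 'a \<Rightarrow> real"
where
  "pi_star P r \<gamma> \<epsilon> lam p0 \<mu> s a =
     (1 + \<epsilon> * tanh (Atilde P r \<gamma> p0 \<mu> s a / (2 * lam))) * p0 s a"

end

theory Submission
  imports Defs begin

definition Mk :: "('s::finite \<Rightarrow> 'a::finite \<Rightarrow> 's \<Rightarrow> real) \<Rightarrow> ('s \<Rightarrow> 'a \<Rightarrow> real) \<Rightarrow> 's \<Rightarrow> 's \<Rightarrow> real"
  where "Mk P p s s' = (\<Sum>a\<in>UNIV. p s a * P s a s')"

lemma sd_Suc': "state_dist P d p (Suc t) s' = (\<Sum>s\<in>UNIV. state_dist P d p t s * Mk P p s s')"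
  by (simp add: Mk_def sum_distrib_left mult.assoc)

lemma Mk_nonneg: "is_kernel P \<Longrightarrow> is_policy p \<Longrightarrow> 0 \<le> Mk P p s s'"
  unfolding Mk_def is_kernel_def is_policy_def by (auto intro!: sum_nonneg)

lemma Mk_row: "is_kernel P \<Longrightarrow> is_policy p \<Longrightarrow> (\<Sum>s'\<in>UNIV. Mk P p s s') = 1"
proof -
  assume k: "is_kernel P" and q: "is_policy p"
  have "(\<Sum>s'\<in>UNIV. Mk P p s s') = (\<Sum>a\<in>UNIV. \<Sum>s'\<in>UNIV. p s a * P s a s')"
    unfolding Mk_def by (rule sum.swap)
  also have "\<dots> = (\<Sum>a\<in>UNIV. p s a)" using k unfolding is_kernel_def
    by (simp add: sum_distrib_left[symmetric])
  finally show ?thesis using q unfolding is_policy_def by simp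
qed

lemma sd_nonneg:
  assumes "is_kernel P" "is_policy p" "\<And>s. 0 \<le> d s"
  shows "0 \<le> state_dist P d p t s"
proof (induction t arbitrary: s)
  case 0 then show ?case using assms by simp
next
  case (Suc t) then show ?case unfolding sd_Suc' using assms
    by (auto intro!: sum_nonneg mult_nonneg_nonneg Mk_nonneg)
qed

lemma sd_sum:
  assumes "is_kernel P" "is_policy p"
  shows "(\<Sum>s\<in>UNIV. state_dist P d p t s) = (\<Sum>s\<in>UNIV. d s)"
proof (induction t)
  case 0 then show ?case by simp
next
  case (Suc t)
  have "(\<Sum>s'\<in>UNIV. state_dist P d p (Suc t) s') = (\<Sum>s\<in>UNIV. state_dist P d p t s * (\<Sum>s'\<in>UNIV. Mk P p s s'))"
    unfolding sd_Suc' by (subst sum.swap) (simp add: sum_distrib_left)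
  also have "\<dots> = (\<Sum>s\<in>UNIV. state_dist P d p t s)" using Mk_row[OF assms] by simp
  finally show ?case using Suc by simp
qed

lemma sd_le:
  assumes "is_kernel P" "is_policy p" "\<And>s. 0 \<le> d s"
  shows "state_dist P d p t s \<le> (\<Sum>s\<in>UNIV. d s)"
proof -
  have "state_dist P d p t s \<le> (\<Sum>s\<in>UNIV. state_dist P d p t s)"
    by (rule member_le_sum) (auto intro: sd_nonneg[OF assms])
  then show ?thesis using sd_sum[OF assms(1,2)] by simp
qed

lemma geo_summable:
  fixes \<gamma> :: real
  assumes "0 \<le> \<gamma>" "\<gamma> < 1" "\<And>t. \<bar>f t\<bar> \<le> C"
  shows "summable (\<lambda>t. \<gamma>^t * f t)"
proof (rule summable_comparison_test'[where g="\<lambda>t. C * \<gamma>^t" and N=0])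
  show "summable (\<lambda>t. C * \<gamma> ^ t)" using assms by (intro summable_mult summable_geometric) simp
  fix n show "norm (\<gamma>^n * f n) \<le> C * \<gamma>^n" using assms
    by (simp add: abs_mult mult.commute mult_right_mono)
qed

lemma sd_summable:
  fixes \<gamma> :: real
  assumes "is_kernel P" "is_policy p" "\<And>s. 0 \<le> d s" "0 \<le> \<gamma>" "\<gamma> < 1"
  shows "summable (\<lambda>t. \<gamma>^t * (state_dist P d p t s * c))"
  apply (rule geo_summable[OF assms(4,5), where C="(\<Sum>s\<in>UNIV. d s) * \<bar>c\<bar>"])
  using sd_nonneg[OF assms(1-3)] sd_le[OF assms(1-3)]
  by (simp add: abs_mult mult_right_mono)


lemma sd_shift: "state_dist P d p (Suc t) = state_dist P (state_dist P d p 1) p t"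
proof (induction t)
  case 0 then show ?case by simp
next
  case (Suc t)
  have "state_dist P d p (Suc (Suc t)) = (\<lambda>s'. \<Sum>s\<in>UNIV. \<Sum>a\<in>UNIV. state_dist P d p (Suc t) s * p s a * P s a s')"
    by (rule state_dist.simps(2))
  also have "\<dots> = (\<lambda>s'. \<Sum>s\<in>UNIV. \<Sum>a\<in>UNIV. state_dist P (state_dist P d p 1) p t s * p s a * P s a s')"
    by (simp only: Suc)
  also have "\<dots> = state_dist P (state_dist P d p 1) p (Suc t)" by (rule state_dist.simps(2)[symmetric])
  finally show ?case .
qed

lemma sd_lin: "state_dist P d p t s' = (\<Sum>u\<in>UNIV. d u * state_dist P (\<lambda>x. if x = u then 1 else 0) p t s')"
proof (induction t arbitrary: s')
  case 0 then show ?case by (simp add: if_distrib cong: if_cong)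
next
  case (Suc t)
  have "state_dist P d p (Suc t) s' = (\<Sum>s\<in>UNIV. (\<Sum>u\<in>UNIV. d u * state_dist P (\<lambda>x. if x = u then 1 else 0) p t s) * Mk P p s s')"
    unfolding sd_Suc' using Suc by simp
  also have "\<dots> = (\<Sum>u\<in>UNIV. d u * (\<Sum>s\<in>UNIV. state_dist P (\<lambda>x. if x = u then 1 else 0) p t s * Mk P p s s'))"
  proof -
    have "(\<Sum>s\<in>UNIV. (\<Sum>u\<in>UNIV. d u * state_dist P (\<lambda>x. if x = u then 1 else 0) p t s) * Mk P p s s')
       = (\<Sum>s\<in>UNIV. \<Sum>u\<in>UNIV. d u * state_dist P (\<lambda>x. if x = u then 1 else 0) p t s * Mk P p s s')"
      by (simp add: sum_distrib_right)
    also have "\<dots> = (\<Sum>u\<in>UNIV. \<Sum>s\<in>UNIV. d u * state_dist P (\<lambda>x. if x = u then 1 else 0) p t s * Mk P p s s')"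
      by (rule sum.swap)
    also have "\<dots> = (\<Sum>u\<in>UNIV. d u * (\<Sum>s\<in>UNIV. state_dist P (\<lambda>x. if x = u then 1 else 0) p t s * Mk P p s s'))"
      by (simp add: sum_distrib_left mult.assoc)
    finally show ?thesis .
  qed
  finally show ?case unfolding sd_Suc' .
qed

lemma delta_sum: fixes s :: "'s::finite" shows "(\<Sum>x\<in>UNIV. (if x = s then 1 else 0) * g x) = (g s::real)"
proof -
  have "(\<Sum>x\<in>UNIV. (if x = s then 1 else 0) * g x) = (\<Sum>x\<in>UNIV. if x = s then g x else 0)"
    by (rule sum.cong) auto
  also have "\<dots> = g s" by simp
  finally show ?thesis .
qed

lemma sd_one_delta: "state_dist P (\<lambda>x. if x = s then 1 else 0) p 1 u = Mk P p s u"
  by (simp add: Mk_def mult.assoc sum_distrib_left[symmetric] delta_sum)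

lemma row_swap: "(\<Sum>s'\<in>UNIV. \<Sum>s\<in>UNIV. (f s::real) * g s s') = (\<Sum>s\<in>UNIV. f s * (\<Sum>s'\<in>UNIV. g s s'))"
  by (subst sum.swap) (simp only: sum_distrib_left)

lemma Q_sum:
  "(\<Sum>a\<in>UNIV. q s a * Qf P r \<gamma> p s a) = exp_reward P r q s + \<gamma> * (\<Sum>u\<in>UNIV. Mk P q s u * Vf P r \<gamma> p u)"
proof -
  have "(\<Sum>a\<in>UNIV. q s a * Qf P r \<gamma> p s a) = exp_reward P r q s + \<gamma> * (\<Sum>a\<in>UNIV. \<Sum>u\<in>UNIV. q s a * P s a u * Vf P r \<gamma> p u)"
    unfolding Qf_def exp_reward_def
    by (simp add: algebra_simps sum.distrib sum_distrib_left)
  also have "(\<Sum>a\<in>UNIV. \<Sum>u\<in>UNIV. q s a * P s a u * Vf P r \<gamma> p u) = (\<Sum>u\<in>UNIV. Mk P q s u * Vf P r \<gamma> p u)"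
    unfolding Mk_def by (subst sum.swap) (simp add: sum_distrib_right)
  finally show ?thesis .
qed

context
  fixes P :: "'s::finite \<Rightarrow> 'a::finite \<Rightarrow> 's \<Rightarrow> real" and \<gamma> :: real
  assumes kernel: "is_kernel P" and g0: "0 \<le> \<gamma>" and g1: "\<gamma> < 1"
begin

lemma eta_summable:
  assumes "is_policy p" "\<And>s. 0 \<le> d s"
  shows "summable (\<lambda>t. \<gamma>^t * (\<Sum>s\<in>UNIV. state_dist P d p t s * R s))"
  unfolding sum_distrib_left
  by (intro summable_sum sd_summable[OF kernel assms g0 g1])

lemma visit_summable:
  assumes "is_policy p" "\<And>s. 0 \<le> d s"
  shows "summable (\<lambda>t. \<gamma>^t * state_dist P d p t s)"
  using sd_summable[OF kernel assms g0 g1, where s=s and c=1] by simp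

lemma eta_visit:
  assumes "is_policy p" "\<And>s. 0 \<le> d s"
  shows "eta P r d \<gamma> p = (\<Sum>s\<in>UNIV. visitation P d \<gamma> p s * exp_reward P r p s)"
proof -
  have "eta P r d \<gamma> p = (\<Sum>t. \<Sum>s\<in>UNIV. \<gamma>^t * (state_dist P d p t s * exp_reward P r p s))"
    by (simp add: eta_def sum_distrib_left)
  also have "\<dots> = (\<Sum>s\<in>UNIV. \<Sum>t. \<gamma>^t * (state_dist P d p t s * exp_reward P r p s))"
    by (rule suminf_sum) (rule sd_summable[OF kernel assms g0 g1])
  also have "\<dots> = (\<Sum>s\<in>UNIV. visitation P d \<gamma> p s * exp_reward P r p s)"
    unfolding visitation_def
    by (simp add: suminf_mult2[OF visit_summable[OF assms]] mult.assoc)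
  finally show ?thesis .
qed

lemma visit_rec:
  assumes "is_policy p" "\<And>s. 0 \<le> d s"
  shows "visitation P d \<gamma> p s' = d s' + \<gamma> * (\<Sum>s\<in>UNIV. visitation P d \<gamma> p s * Mk P p s s')"
proof -
  let ?f = "\<lambda>t. \<gamma>^t * state_dist P d p t s'"
  have sf: "summable ?f" by (rule visit_summable[OF assms])
  have vs: "summable (\<lambda>t. \<gamma> * (\<gamma>^t * state_dist P d p t s))" for s
    by (intro summable_mult visit_summable[OF assms])
  have "visitation P d \<gamma> p s' = ?f 0 + (\<Sum>t. ?f (Suc t))"
    unfolding visitation_def using suminf_split_head[OF sf] by simp
  also have "(\<Sum>t. ?f (Suc t)) = (\<Sum>t. \<Sum>s\<in>UNIV. \<gamma> * (\<gamma>^t * state_dist P d p t s) * Mk P p s s')"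
  proof (rule arg_cong[where f=suminf], rule ext)
    fix t
    show "?f (Suc t) = (\<Sum>s\<in>UNIV. \<gamma> * (\<gamma>^t * state_dist P d p t s) * Mk P p s s')"
      by (simp only: sd_Suc' power_Suc sum_distrib_left mult.assoc)
  qed
  also have "\<dots> = (\<Sum>s\<in>UNIV. \<Sum>t. \<gamma> * (\<gamma>^t * state_dist P d p t s) * Mk P p s s')"
    by (rule suminf_sum) (intro summable_mult2 vs)
  also have "\<dots> = (\<Sum>s\<in>UNIV. (\<Sum>t. \<gamma> * (\<gamma>^t * state_dist P d p t s)) * Mk P p s s')"
    by (rule sum.cong[OF refl]) (rule suminf_mult2[OF vs, symmetric])
  also have "\<dots> = (\<Sum>s\<in>UNIV. \<gamma> * visitation P d \<gamma> p s * Mk P p s s')"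
    unfolding visitation_def
    by (rule sum.cong[OF refl]) (simp only: suminf_mult[OF visit_summable[OF assms]])
  finally show ?thesis by (simp add: sum_distrib_left mult.assoc)
qed

lemma visit_nonneg:
  assumes "is_policy p" "\<And>s. 0 \<le> d s"
  shows "0 \<le> visitation P d \<gamma> p s"
  unfolding visitation_def
  by (intro suminf_nonneg visit_summable[OF assms] mult_nonneg_nonneg zero_le_power g0 sd_nonneg[OF kernel assms])

lemma visit_sum:
  assumes "is_policy p" "\<And>s. 0 \<le> d s"
  shows "(\<Sum>s\<in>UNIV. visitation P d \<gamma> p s) = (\<Sum>s\<in>UNIV. d s) / (1 - \<gamma>)"
proof -
  let ?v = "visitation P d \<gamma> p"
  have "(\<Sum>s'\<in>UNIV. ?v s') = (\<Sum>s'\<in>UNIV. d s' + \<gamma> * (\<Sum>s\<in>UNIV. ?v s * Mk P p s s'))"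
    by (rule sum.cong[OF refl], rule visit_rec[OF assms])
  also have "\<dots> = (\<Sum>s'\<in>UNIV. d s') + \<gamma> * (\<Sum>s'\<in>UNIV. \<Sum>s\<in>UNIV. ?v s * Mk P p s s')"
    by (simp add: sum.distrib sum_distrib_left)
  also have "(\<Sum>s'\<in>UNIV. \<Sum>s\<in>UNIV. ?v s * Mk P p s s') = (\<Sum>s\<in>UNIV. \<Sum>s'\<in>UNIV. ?v s * Mk P p s s')"
    by (rule sum.swap)
  also have "\<dots> = (\<Sum>s\<in>UNIV. ?v s * (\<Sum>s'\<in>UNIV. Mk P p s s'))"
    by (simp add: sum_distrib_left)
  also have "\<dots> = (\<Sum>s\<in>UNIV. ?v s)"
    using Mk_row[OF kernel assms(1)] by simp
  finally show ?thesis using g1 by (simp add: field_simps)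
qed

lemma eta_shift:
  assumes "is_policy p" "\<And>s. 0 \<le> d s"
  shows "eta P r d \<gamma> p = (\<Sum>s\<in>UNIV. d s * exp_reward P r p s) + \<gamma> * eta P r (state_dist P d p 1) \<gamma> p"
proof -
  let ?g = "\<lambda>t. \<gamma>^t * (\<Sum>s\<in>UNIV. state_dist P d p t s * exp_reward P r p s)"
  have d1: "0 \<le> state_dist P d p 1 s" for s by (rule sd_nonneg[OF kernel assms])
  have "eta P r d \<gamma> p = ?g 0 + (\<Sum>t. ?g (Suc t))"
    unfolding eta_def using suminf_split_head[OF eta_summable[OF assms]] by simp
  also have "(\<Sum>t. ?g (Suc t)) = (\<Sum>t. \<gamma> * (\<gamma>^t * (\<Sum>s\<in>UNIV. state_dist P (state_dist P d p 1) p t s * exp_reward P r p s)))"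
    by (simp only: sd_shift power_Suc mult.assoc)
  also have "\<dots> = \<gamma> * eta P r (state_dist P d p 1) \<gamma> p"
    unfolding eta_def by (rule suminf_mult[OF eta_summable[OF assms(1) d1]])
  finally show ?thesis by simp
qed

lemma eta_lin:
  assumes "is_policy p" "\<And>s. 0 \<le> d s"
  shows "eta P r d \<gamma> p = (\<Sum>u\<in>UNIV. d u * Vf P r \<gamma> p u)"
proof -
  let ?D = "\<lambda>u. (\<lambda>x::'s. if x = u then 1 else (0::real))"
  have dn: "0 \<le> ?D u x" for u x by simp
  have "eta P r d \<gamma> p = (\<Sum>t. \<Sum>u\<in>UNIV. d u * (\<gamma>^t * (\<Sum>s\<in>UNIV. state_dist P (?D u) p t s * exp_reward P r p s)))"
    unfolding eta_def
  proof (rule arg_cong[where f=suminf], rule ext)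
    fix t
    have "\<gamma> ^ t * (\<Sum>s\<in>UNIV. state_dist P d p t s * exp_reward P r p s)
       = \<gamma> ^ t * (\<Sum>s\<in>UNIV. \<Sum>u\<in>UNIV. d u * state_dist P (?D u) p t s * exp_reward P r p s)"
      by (subst sd_lin) (simp add: sum_distrib_right)
    also have "\<dots> = \<gamma> ^ t * (\<Sum>u\<in>UNIV. \<Sum>s\<in>UNIV. d u * state_dist P (?D u) p t s * exp_reward P r p s)"
      by (subst sum.swap) (rule refl)
    also have "\<dots> = (\<Sum>u\<in>UNIV. d u * (\<gamma> ^ t * (\<Sum>s\<in>UNIV. state_dist P (?D u) p t s * exp_reward P r p s)))"
      by (simp add: sum_distrib_left mult_ac)
    finally show "\<gamma> ^ t * (\<Sum>s\<in>UNIV. state_dist P d p t s * exp_reward P r p s)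
       = (\<Sum>u\<in>UNIV. d u * (\<gamma> ^ t * (\<Sum>s\<in>UNIV. state_dist P (?D u) p t s * exp_reward P r p s)))" .
  qed
  also have "\<dots> = (\<Sum>u\<in>UNIV. \<Sum>t. d u * (\<gamma>^t * (\<Sum>s\<in>UNIV. state_dist P (?D u) p t s * exp_reward P r p s)))"
    by (rule suminf_sum) (intro summable_mult eta_summable[OF assms(1) dn])
  also have "\<dots> = (\<Sum>u\<in>UNIV. d u * Vf P r \<gamma> p u)"
    unfolding Vf_def eta_def
    by (simp add: suminf_mult eta_summable[OF assms(1) dn])
  finally show ?thesis .
qed

lemma bellman:
  assumes "is_policy p"
  shows "Vf P r \<gamma> p s = exp_reward P r p s + \<gamma> * (\<Sum>u\<in>UNIV. Mk P p s u * Vf P r \<gamma> p u)"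
proof -
  let ?D = "(\<lambda>x::'s. if x = s then 1 else (0::real))"
  have dn: "0 \<le> ?D x" for x by simp
  have "Vf P r \<gamma> p s = (\<Sum>x\<in>UNIV. ?D x * exp_reward P r p x) + \<gamma> * eta P r (state_dist P ?D p 1) \<gamma> p"
    unfolding Vf_def by (rule eta_shift[OF assms dn])
  also have "eta P r (state_dist P ?D p 1) \<gamma> p = (\<Sum>u\<in>UNIV. Mk P p s u * Vf P r \<gamma> p u)"
  proof -
    have "\<And>u. 0 \<le> state_dist P ?D p 1 u" by (rule sd_nonneg[OF kernel assms dn])
    then show ?thesis by (simp only: eta_lin[OF assms] sd_one_delta)
  qed
  finally show ?thesis by (simp add: delta_sum)
qed


lemma A_sum_zero:
  assumes p: "is_policy p"
  shows "(\<Sum>a\<in>UNIV. p s a * Af P r \<gamma> p s a) = 0"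
proof -
  have "(\<Sum>a\<in>UNIV. p s a * Af P r \<gamma> p s a) = (\<Sum>a\<in>UNIV. p s a * Qf P r \<gamma> p s a) - (\<Sum>a\<in>UNIV. p s a) * Vf P r \<gamma> p s"
    by (simp add: Af_def right_diff_distrib sum_subtractf sum_distrib_right)
  also have "\<dots> = 0" using p bellman[OF p, of r s] unfolding is_policy_def by (simp add: Q_sum)
  finally show ?thesis .
qed

lemma perf_diff:
  assumes p0: "is_policy p0" and q: "is_policy q" and dn: "\<And>s. 0 \<le> d s"
  shows "eta P r d \<gamma> q - eta P r d \<gamma> p0
       = (\<Sum>s\<in>UNIV. visitation P d \<gamma> q s * (\<Sum>a\<in>UNIV. q s a * Af P r \<gamma> p0 s a))"
proof -
  let ?V = "Vf P r \<gamma> p0" and ?v = "visitation P d \<gamma> q" and ?R = "exp_reward P r q"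
  have h: "(\<Sum>a\<in>UNIV. q s a * Af P r \<gamma> p0 s a) = ?R s + \<gamma> * (\<Sum>u\<in>UNIV. Mk P q s u * ?V u) - ?V s" for s
  proof -
    have "(\<Sum>a\<in>UNIV. q s a * Af P r \<gamma> p0 s a) = (\<Sum>a\<in>UNIV. q s a * Qf P r \<gamma> p0 s a) - (\<Sum>a\<in>UNIV. q s a) * ?V s"
      by (simp add: Af_def right_diff_distrib sum_subtractf sum_distrib_right)
    then show ?thesis using q unfolding is_policy_def by (simp add: Q_sum)
  qed
  have rec: "\<gamma> * (\<Sum>s\<in>UNIV. ?v s * Mk P q s u) = ?v u - d u" for u
    using visit_rec[OF q dn, where s'=u] by simp
  have "(\<Sum>s\<in>UNIV. ?v s * (\<Sum>a\<in>UNIV. q s a * Af P r \<gamma> p0 s a))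
      = (\<Sum>s\<in>UNIV. ?v s * ?R s) + \<gamma> * (\<Sum>s\<in>UNIV. \<Sum>u\<in>UNIV. ?v s * Mk P q s u * ?V u) - (\<Sum>s\<in>UNIV. ?v s * ?V s)"
    by (simp add: h algebra_simps sum.distrib sum_subtractf sum_distrib_left)
  also have "(\<Sum>s\<in>UNIV. \<Sum>u\<in>UNIV. ?v s * Mk P q s u * ?V u) = (\<Sum>u\<in>UNIV. (\<Sum>s\<in>UNIV. ?v s * Mk P q s u) * ?V u)"
    by (subst sum.swap) (simp add: sum_distrib_right)
  also have "\<gamma> * \<dots> = (\<Sum>u\<in>UNIV. \<gamma> * ((\<Sum>s\<in>UNIV. ?v s * Mk P q s u) * ?V u))"
    by (rule sum_distrib_left)
  also have "\<dots> = (\<Sum>u\<in>UNIV. (?v u - d u) * ?V u)"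
    by (rule sum.cong[OF refl]) (simp only: mult.assoc[symmetric] rec)
  finally have "(\<Sum>s\<in>UNIV. ?v s * (\<Sum>a\<in>UNIV. q s a * Af P r \<gamma> p0 s a))
      = (\<Sum>s\<in>UNIV. ?v s * ?R s) - (\<Sum>u\<in>UNIV. d u * ?V u)"
    by (simp add: left_diff_distrib sum_subtractf)
  then show ?thesis by (simp add: eta_visit[OF q dn] eta_lin[OF p0 dn])
qed

lemma visit_dist:
  assumes p: "is_policy p" and q: "is_policy q" and dn: "\<And>s. 0 \<le> d s"
  shows "(1 - \<gamma>) * (\<Sum>s\<in>UNIV. \<bar>visitation P d \<gamma> p s - visitation P d \<gamma> q s\<bar>)
     \<le> \<gamma> * (\<Sum>s\<in>UNIV. visitation P d \<gamma> q s * (\<Sum>a\<in>UNIV. \<bar>p s a - q s a\<bar>))"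
proof -
  let ?vp = "visitation P d \<gamma> p" and ?vq = "visitation P d \<gamma> q"
  let ?D = "\<lambda>s. ?vp s - ?vq s"
  have vqn: "0 \<le> ?vq s" for s by (rule visit_nonneg[OF q dn])
  have Pn: "0 \<le> P s a s'" for s a s' using kernel unfolding is_kernel_def by auto
  have Pr: "(\<Sum>s'\<in>UNIV. P s a s') = 1" for s a using kernel unfolding is_kernel_def by auto
  have pt: "\<bar>?D s'\<bar> \<le> \<gamma> * (\<Sum>s\<in>UNIV. \<bar>?D s\<bar> * Mk P p s s')
          + \<gamma> * (\<Sum>s\<in>UNIV. ?vq s * (\<Sum>a\<in>UNIV. \<bar>p s a - q s a\<bar> * P s a s'))" for s'
  proof -
    have eqD: "?D s' = \<gamma> * (\<Sum>s\<in>UNIV. ?D s * Mk P p s s') + \<gamma> * (\<Sum>s\<in>UNIV. ?vq s * (Mk P p s s' - Mk P q s s'))"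
    proof -
      let ?X = "(\<Sum>s\<in>UNIV. ?vp s * Mk P p s s')" and ?Y = "(\<Sum>s\<in>UNIV. ?vq s * Mk P q s s')"
      let ?A = "(\<Sum>s\<in>UNIV. ?D s * Mk P p s s')" and ?B = "(\<Sum>s\<in>UNIV. ?vq s * (Mk P p s s' - Mk P q s s'))"
      have rp: "?vp s' = d s' + \<gamma> * ?X" by (rule visit_rec[OF p dn])
      have rq: "?vq s' = d s' + \<gamma> * ?Y" by (rule visit_rec[OF q dn])
      have e: "?A + ?B = ?X - ?Y"
        by (simp add: left_diff_distrib right_diff_distrib sum_subtractf)
      have "\<gamma> * ?A + \<gamma> * ?B = \<gamma> * (?A + ?B)" by (simp only: distrib_left)
      also have "\<dots> = \<gamma> * ?X - \<gamma> * ?Y" by (subst e) (rule right_diff_distrib)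
      finally have e2: "\<gamma> * ?A + \<gamma> * ?B = \<gamma> * ?X - \<gamma> * ?Y" .
      show ?thesis using rp rq e2 by linarith
    qed
    have bnd: "\<bar>\<gamma> * (\<Sum>s\<in>UNIV. ?D s * Mk P p s s') + \<gamma> * (\<Sum>s\<in>UNIV. ?vq s * (Mk P p s s' - Mk P q s s'))\<bar> \<le> \<gamma> * (\<Sum>s\<in>UNIV. \<bar>?D s\<bar> * Mk P p s s')
          + \<gamma> * (\<Sum>s\<in>UNIV. ?vq s * (\<Sum>a\<in>UNIV. \<bar>p s a - q s a\<bar> * P s a s'))"
    proof (rule order_trans[OF abs_triangle_ineq], rule add_mono)
      show "\<bar>\<gamma> * (\<Sum>s\<in>UNIV. ?D s * Mk P p s s')\<bar> \<le> \<gamma> * (\<Sum>s\<in>UNIV. \<bar>?D s\<bar> * Mk P p s s')"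
      proof -
        have "\<bar>\<Sum>s\<in>UNIV. ?D s * Mk P p s s'\<bar> \<le> (\<Sum>s\<in>UNIV. \<bar>?D s * Mk P p s s'\<bar>)" by (rule sum_abs)
        also have "\<dots> = (\<Sum>s\<in>UNIV. \<bar>?D s\<bar> * Mk P p s s')"
          by (rule sum.cong[OF refl]) (simp only: abs_mult abs_of_nonneg[OF Mk_nonneg[OF kernel p]])
        finally show ?thesis by (simp only: abs_mult abs_of_nonneg[OF g0] mult_left_mono[OF _ g0])
      qed
      have mk: "\<bar>Mk P p s s' - Mk P q s s'\<bar> \<le> (\<Sum>a\<in>UNIV. \<bar>p s a - q s a\<bar> * P s a s')" for s
      proof -
        have "Mk P p s s' - Mk P q s s' = (\<Sum>a\<in>UNIV. (p s a - q s a) * P s a s')"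
          unfolding Mk_def by (simp add: left_diff_distrib sum_subtractf)
        also have "\<bar>\<dots>\<bar> \<le> (\<Sum>a\<in>UNIV. \<bar>(p s a - q s a) * P s a s'\<bar>)" by (rule sum_abs)
        also have "\<dots> = (\<Sum>a\<in>UNIV. \<bar>p s a - q s a\<bar> * P s a s')"
          by (rule sum.cong[OF refl]) (simp only: abs_mult abs_of_nonneg[OF Pn])
        finally show ?thesis .
      qed
      then have "\<bar>\<Sum>s\<in>UNIV. ?vq s * (Mk P p s s' - Mk P q s s')\<bar> \<le> (\<Sum>s\<in>UNIV. ?vq s * (\<Sum>a\<in>UNIV. \<bar>p s a - q s a\<bar> * P s a s'))"
      proof -
        have "\<bar>\<Sum>s\<in>UNIV. ?vq s * (Mk P p s s' - Mk P q s s')\<bar> \<le> (\<Sum>s\<in>UNIV. \<bar>?vq s * (Mk P p s s' - Mk P q s s')\<bar>)"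
          by (rule sum_abs)
        also have "\<dots> \<le> (\<Sum>s\<in>UNIV. ?vq s * (\<Sum>a\<in>UNIV. \<bar>p s a - q s a\<bar> * P s a s'))"
        proof (rule sum_mono)
          fix s
          show "\<bar>?vq s * (Mk P p s s' - Mk P q s s')\<bar> \<le> ?vq s * (\<Sum>a\<in>UNIV. \<bar>p s a - q s a\<bar> * P s a s')"
            by (simp only: abs_mult abs_of_nonneg[OF vqn]) (rule mult_left_mono[OF mk vqn])
        qed
        finally show ?thesis .
      qed
      then show "\<bar>\<gamma> * (\<Sum>s\<in>UNIV. ?vq s * (Mk P p s s' - Mk P q s s'))\<bar> \<le> \<gamma> * (\<Sum>s\<in>UNIV. ?vq s * (\<Sum>a\<in>UNIV. \<bar>p s a - q s a\<bar> * P s a s'))"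
        by (simp only: abs_mult abs_of_nonneg[OF g0] mult_left_mono[OF _ g0])
    qed
    show ?thesis by (subst eqD) (rule bnd)
  qed
  have "(\<Sum>s'\<in>UNIV. \<bar>?D s'\<bar>) \<le> (\<Sum>s'\<in>UNIV. \<gamma> * (\<Sum>s\<in>UNIV. \<bar>?D s\<bar> * Mk P p s s')
          + \<gamma> * (\<Sum>s\<in>UNIV. ?vq s * (\<Sum>a\<in>UNIV. \<bar>p s a - q s a\<bar> * P s a s')))"
    by (rule sum_mono) (rule pt)
  also have "\<dots> = \<gamma> * (\<Sum>s\<in>UNIV. \<bar>?D s\<bar> * (\<Sum>s'\<in>UNIV. Mk P p s s'))
       + \<gamma> * (\<Sum>s\<in>UNIV. ?vq s * (\<Sum>a\<in>UNIV. \<bar>p s a - q s a\<bar> * (\<Sum>s'\<in>UNIV. P s a s')))"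
    by (simp only: sum.distrib sum_distrib_left[symmetric] row_swap)
  also have "\<dots> = \<gamma> * (\<Sum>s\<in>UNIV. \<bar>?D s\<bar>) + \<gamma> * (\<Sum>s\<in>UNIV. ?vq s * (\<Sum>a\<in>UNIV. \<bar>p s a - q s a\<bar>))"
    by (simp only: Pr Mk_row[OF kernel p] mult_1_right)
  finally have fin: "(\<Sum>s\<in>UNIV. \<bar>?D s\<bar>) \<le> \<gamma> * (\<Sum>s\<in>UNIV. \<bar>?D s\<bar>) + \<gamma> * (\<Sum>s\<in>UNIV. ?vq s * (\<Sum>a\<in>UNIV. \<bar>p s a - q s a\<bar>))" .
  have "(1 - \<gamma>) * (\<Sum>s\<in>UNIV. \<bar>?D s\<bar>) = (\<Sum>s\<in>UNIV. \<bar>?D s\<bar>) - \<gamma> * (\<Sum>s\<in>UNIV. \<bar>?D s\<bar>)"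
    by (simp add: left_diff_distrib)
  with fin show ?thesis by linarith
qed

end

lemma tanh_prod_nonneg:
  fixes x c :: real assumes "0 < c" shows "0 \<le> tanh (x / c) * x"
proof (cases "0 \<le> x")
  case True then show ?thesis using assms by simp
next
  case False
  then have "tanh (x / c) \<le> 0" using assms by (simp add: divide_nonpos_pos)
  then show ?thesis using False by (simp add: mult_nonpos_nonpos)
qed

lemma abs_tanh_le: "\<bar>tanh (x::real)\<bar> \<le> 1"
  using tanh_real_lt_1[of x] tanh_real_gt_neg1[of x] by linarith

lemma alg1: "(c::real) \<noteq> 0 \<Longrightarrow> g * (J + e / c) / c = g * J / c + g * e / c^2"
  by (simp add: field_simps power2_eq_square)

theorem corollary2:
  fixes P :: "'s::finite \<Rightarrow> 'a::finite \<Rightarrow> 's \<Rightarrow> real"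
    and r :: "'s \<Rightarrow> 'a \<Rightarrow> 's \<Rightarrow> real"
    and d0 :: "'s \<Rightarrow> real"
    and \<gamma> \<epsilon> lam :: real
    and pi0 pi_theta :: "'s \<Rightarrow> 'a \<Rightarrow> real"
    and \<mu> :: "'s \<Rightarrow> real"
  assumes kernel: "is_kernel P"
    and init: "is_distribution d0"
    and gamma: "0 < \<gamma>" "\<gamma> < 1"
    and eps: "0 < \<epsilon>" "\<epsilon> < 1"
    and lam: "0 < lam"
    and pol0: "is_policy pi0"
    and pos0: "\<And>s a. 0 < pi0 s a"
    and polth: "is_policy pi_theta"
    and mu: "\<And>s. (\<Sum>a\<in>UNIV. pi0 s a * tanh (Atilde P r \<gamma> pi0 \<mu> s a / (2 * lam))) = 0"
  defines "DTV \<equiv> (\<lambda>s. \<Sum>a\<in>UNIV. pi0 s a *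
                 \<bar>pi_star P r \<gamma> \<epsilon> lam pi0 \<mu> s a / pi0 s a - pi_theta s a / pi0 s a\<bar>)"
    and "DATV \<equiv> (\<lambda>s. \<Sum>a\<in>UNIV. pi0 s a *
                 (\<bar>pi_star P r \<gamma> \<epsilon> lam pi0 \<mu> s a / pi0 s a - pi_theta s a / pi0 s a\<bar>
                  * \<bar>Af P r \<gamma> pi0 s a\<bar>))"
    and "B \<equiv> (\<Sum>s\<in>UNIV. visitation P d0 \<gamma> (pi_star P r \<gamma> \<epsilon> lam pi0 \<mu>) s *
               (\<Sum>a\<in>UNIV. pi0 s a * (tanh (Atilde P r \<gamma> pi0 \<mu> s a / (2 * lam))
                                        * Atilde P r \<gamma> pi0 \<mu> s a)))"
    and "\<delta> \<equiv> Max (range (\<lambda>s. \<Sum>a\<in>UNIV. pi0 s a * (tanh (Atilde P r \<gamma> pi0 \<mu> s a / (2 * lam))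
                                        * Atilde P r \<gamma> pi0 \<mu> s a)))"
  shows "eta P r d0 \<gamma> pi_theta \<ge> eta P r d0 \<gamma> pi0 + \<epsilon> * B
           - (\<Sum>s\<in>UNIV. visitation P d0 \<gamma> pi0 s * DATV s)
           - \<gamma> * Max (range DATV) / (1 - \<gamma>) * (\<Sum>s\<in>UNIV. visitation P d0 \<gamma> pi0 s * DTV s)
           - \<gamma> * \<epsilon> * Max (range DATV) / (1 - \<gamma>)^2
           - \<gamma> * \<epsilon> * \<delta> * Max (range DTV) / (1 - \<gamma>)^2"
proof -
  have g0: "0 \<le> \<gamma>" using gamma by simp
  have g1: "\<gamma> < 1" using gamma by simp
  have cpos: "0 < 1 - \<gamma>" using gamma by simp
  have dn: "\<And>s. 0 \<le> d0 s" and dsum: "(\<Sum>s\<in>UNIV. d0 s) = 1" using init unfolding is_distribution_def by auto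
  have DTV_def': "DTV s = (\<Sum>a\<in>UNIV. pi0 s a *
                 \<bar>pi_star P r \<gamma> \<epsilon> lam pi0 \<mu> s a / pi0 s a - pi_theta s a / pi0 s a\<bar>)" for s
    using assms(12) by simp
  have DATV_def': "DATV s = (\<Sum>a\<in>UNIV. pi0 s a *
                 (\<bar>pi_star P r \<gamma> \<epsilon> lam pi0 \<mu> s a / pi0 s a - pi_theta s a / pi0 s a\<bar>
                  * \<bar>Af P r \<gamma> pi0 s a\<bar>))" for s
    using assms(13) by simp
  have B_def': "B = (\<Sum>s\<in>UNIV. visitation P d0 \<gamma> (pi_star P r \<gamma> \<epsilon> lam pi0 \<mu>) s *
               (\<Sum>a\<in>UNIV. pi0 s a * (tanh (Atilde P r \<gamma> pi0 \<mu> s a / (2 * lam))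
                                        * Atilde P r \<gamma> pi0 \<mu> s a)))"
    using assms(14) by simp
  have delta_def': "\<delta> = Max (range (\<lambda>s. \<Sum>a\<in>UNIV. pi0 s a * (tanh (Atilde P r \<gamma> pi0 \<mu> s a / (2 * lam))
                                        * Atilde P r \<gamma> pi0 \<mu> s a)))"
    using assms(15) by simp
  define ps where "ps = pi_star P r \<gamma> \<epsilon> lam pi0 \<mu>"
  define tt where "tt = (\<lambda>s a. tanh (Atilde P r \<gamma> pi0 \<mu> s a / (2 * lam)))"
  define At where "At = Atilde P r \<gamma> pi0 \<mu>"
  define A where "A = Af P r \<gamma> pi0"
  define V where "V = Vf P r \<gamma> pi0"
  define g where "g = (\<lambda>s. \<Sum>a\<in>UNIV. pi0 s a * (tt s a * At s a))"
  define v0 where "v0 = visitation P d0 \<gamma> pi0"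
  define vt where "vt = visitation P d0 \<gamma> pi_theta"
  define vs where "vs = visitation P d0 \<gamma> ps"
  define MTV where "MTV = Max (range DTV)"
  define MATV where "MATV = Max (range DATV)"
  define J where "J = (\<Sum>s\<in>UNIV. v0 s * DTV s)"
  define JA where "JA = (\<Sum>s\<in>UNIV. v0 s * DATV s)"
  have p0n: "0 \<le> pi0 s a" for s a using pos0[of s a] by simp
  have p0s: "(\<Sum>a\<in>UNIV. pi0 s a) = 1" for s using pol0 unfolding is_policy_def by auto
  have ptn: "0 \<le> pi_theta s a" for s a using polth unfolding is_policy_def by auto
  have pts: "(\<Sum>a\<in>UNIV. pi_theta s a) = 1" for s using polth unfolding is_policy_def by auto
  have ps_eq: "ps s a = (1 + \<epsilon> * tt s a) * pi0 s a" for s a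
    unfolding ps_def tt_def pi_star_def by simp
  have tt_abs: "\<bar>tt s a\<bar> \<le> 1" for s a unfolding tt_def by (rule abs_tanh_le)
  have mu': "(\<Sum>a\<in>UNIV. pi0 s a * tt s a) = 0" for s unfolding tt_def by (rule mu)
  have ps_pol: "is_policy ps"
    unfolding is_policy_def
  proof (intro conjI allI)
    fix s a
    have "\<bar>\<epsilon> * tt s a\<bar> \<le> \<epsilon>" using tt_abs[of s a] eps by (simp add: abs_mult mult_left_le)
    then have "0 \<le> 1 + \<epsilon> * tt s a" using eps by linarith
    then show "0 \<le> ps s a" unfolding ps_eq using p0n by simp
  next
    fix s
    have "(\<Sum>a\<in>UNIV. ps s a) = (\<Sum>a\<in>UNIV. pi0 s a) + \<epsilon> * (\<Sum>a\<in>UNIV. pi0 s a * tt s a)"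
      unfolding ps_eq by (simp add: algebra_simps sum.distrib sum_distrib_left)
    then show "(\<Sum>a\<in>UNIV. ps s a) = 1" using p0s mu' by simp
  qed
  have g_nonneg: "0 \<le> g s" for s
    unfolding g_def tt_def At_def
    by (intro sum_nonneg mult_nonneg_nonneg p0n tanh_prod_nonneg) (use lam in simp)
  have g_le: "g s \<le> \<delta>" for s
    unfolding delta_def' g_def tt_def At_def by (rule Max_ge) auto
  have delta_nonneg: "0 \<le> \<delta>" using g_nonneg g_le by (meson order_trans)
  have DTV_eq: "DTV s = (\<Sum>a\<in>UNIV. \<bar>ps s a - pi_theta s a\<bar>)" for s
    unfolding DTV_def' ps_def
  proof (rule sum.cong[OF refl])
    fix a
    have p: "0 < pi0 s a" by (rule pos0)
    have "pi_star P r \<gamma> \<epsilon> lam pi0 \<mu> s a / pi0 s a - pi_theta s a / pi0 s a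
          = (pi_star P r \<gamma> \<epsilon> lam pi0 \<mu> s a - pi_theta s a) / pi0 s a"
      by (simp add: diff_divide_distrib)
    then show "pi0 s a * \<bar>pi_star P r \<gamma> \<epsilon> lam pi0 \<mu> s a / pi0 s a - pi_theta s a / pi0 s a\<bar>
          = \<bar>pi_star P r \<gamma> \<epsilon> lam pi0 \<mu> s a - pi_theta s a\<bar>"
      using p by (simp add: abs_divide)
  qed
  have DATV_eq: "DATV s = (\<Sum>a\<in>UNIV. \<bar>ps s a - pi_theta s a\<bar> * \<bar>A s a\<bar>)" for s
    unfolding DATV_def' ps_def A_def
  proof (rule sum.cong[OF refl])
    fix a
    have p: "0 < pi0 s a" by (rule pos0)
    have "pi_star P r \<gamma> \<epsilon> lam pi0 \<mu> s a / pi0 s a - pi_theta s a / pi0 s a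
          = (pi_star P r \<gamma> \<epsilon> lam pi0 \<mu> s a - pi_theta s a) / pi0 s a"
      by (simp add: diff_divide_distrib)
    then show "pi0 s a * (\<bar>pi_star P r \<gamma> \<epsilon> lam pi0 \<mu> s a / pi0 s a - pi_theta s a / pi0 s a\<bar> * \<bar>Af P r \<gamma> pi0 s a\<bar>)
          = \<bar>pi_star P r \<gamma> \<epsilon> lam pi0 \<mu> s a - pi_theta s a\<bar> * \<bar>Af P r \<gamma> pi0 s a\<bar>"
      using p by (simp add: abs_divide)
  qed
  have DTV_nonneg: "0 \<le> DTV s" for s unfolding DTV_eq by (intro sum_nonneg) simp
  have DATV_nonneg: "0 \<le> DATV s" for s unfolding DATV_eq by (intro sum_nonneg) simp
  have DTV_le: "DTV s \<le> MTV" for s unfolding MTV_def by (rule Max_ge) auto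
  have DATV_le: "DATV s \<le> MATV" for s unfolding MATV_def by (rule Max_ge) auto
  have MATV_nonneg: "0 \<le> MATV" using DATV_nonneg DATV_le by (meson order_trans)
  have Asum0: "(\<Sum>a\<in>UNIV. pi0 s a * A s a) = 0" for s
    unfolding A_def by (rule A_sum_zero[OF kernel g0 g1 pol0])
  have A_eq: "A s a = At s a + \<mu> s - V s" for s a
    unfolding A_def At_def V_def Af_def Atilde_def by simp
  have key: "\<epsilon> * g s - DATV s \<le> (\<Sum>a\<in>UNIV. pi_theta s a * A s a)" for s
  proof -
    have t1: "(\<Sum>a\<in>UNIV. pi0 s a * tt s a * A s a) = g s"
    proof -
      have "(\<Sum>a\<in>UNIV. pi0 s a * tt s a * A s a)
          = (\<Sum>a\<in>UNIV. pi0 s a * (tt s a * At s a)) + (\<mu> s - V s) * (\<Sum>a\<in>UNIV. pi0 s a * tt s a)"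
        unfolding A_eq by (simp add: algebra_simps sum.distrib sum_distrib_left sum_distrib_right sum_subtractf)
      then show ?thesis using mu' unfolding g_def by simp
    qed
    have "(\<Sum>a\<in>UNIV. ps s a * A s a) = (\<Sum>a\<in>UNIV. pi0 s a * A s a) + \<epsilon> * (\<Sum>a\<in>UNIV. pi0 s a * tt s a * A s a)"
      unfolding ps_eq by (simp add: algebra_simps sum.distrib sum_distrib_left)
    then have e1: "(\<Sum>a\<in>UNIV. ps s a * A s a) = \<epsilon> * g s" using Asum0 t1 by simp
    have "(\<Sum>a\<in>UNIV. ps s a * A s a) - (\<Sum>a\<in>UNIV. pi_theta s a * A s a) = (\<Sum>a\<in>UNIV. (ps s a - pi_theta s a) * A s a)"
      by (simp add: left_diff_distrib sum_subtractf)
    also have "\<dots> \<le> (\<Sum>a\<in>UNIV. \<bar>ps s a - pi_theta s a\<bar> * \<bar>A s a\<bar>)"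
      by (intro sum_mono) (metis abs_ge_self abs_mult)
    also have "\<dots> = DATV s" by (simp add: DATV_eq)
    finally show ?thesis using e1 by simp
  qed
  have vtn: "0 \<le> vt s" for s unfolding vt_def by (rule visit_nonneg[OF kernel g0 g1 polth dn])
  have v0n: "0 \<le> v0 s" for s unfolding v0_def by (rule visit_nonneg[OF kernel g0 g1 pol0 dn])
  have vsn: "0 \<le> vs s" for s unfolding vs_def by (rule visit_nonneg[OF kernel g0 g1 ps_pol dn])
  have v0sum: "(\<Sum>s\<in>UNIV. v0 s) = 1 / (1 - \<gamma>)" unfolding v0_def using visit_sum[OF kernel g0 g1 pol0 dn] dsum by simp
  have vssum: "(\<Sum>s\<in>UNIV. vs s) = 1 / (1 - \<gamma>)" unfolding vs_def using visit_sum[OF kernel g0 g1 ps_pol dn] dsum by simp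
  have perf: "eta P r d0 \<gamma> pi_theta - eta P r d0 \<gamma> pi0 = (\<Sum>s\<in>UNIV. vt s * (\<Sum>a\<in>UNIV. pi_theta s a * A s a))"
    unfolding vt_def A_def by (rule perf_diff[OF kernel g0 g1 pol0 polth dn])
  have step1: "\<epsilon> * (\<Sum>s\<in>UNIV. vt s * g s) - (\<Sum>s\<in>UNIV. vt s * DATV s) \<le> eta P r d0 \<gamma> pi_theta - eta P r d0 \<gamma> pi0"
  proof -
    have "(\<Sum>s\<in>UNIV. vt s * (\<epsilon> * g s - DATV s)) \<le> (\<Sum>s\<in>UNIV. vt s * (\<Sum>a\<in>UNIV. pi_theta s a * A s a))"
      by (intro sum_mono mult_left_mono key vtn)
    moreover have "(\<Sum>s\<in>UNIV. vt s * (\<epsilon> * g s - DATV s)) = \<epsilon> * (\<Sum>s\<in>UNIV. vt s * g s) - (\<Sum>s\<in>UNIV. vt s * DATV s)"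
      by (simp add: algebra_simps sum_subtractf sum_distrib_left)
    ultimately show ?thesis using perf by simp
  qed
  define X where "X = (\<Sum>s\<in>UNIV. \<bar>vt s - vs s\<bar>)"
  define Y where "Y = (\<Sum>s\<in>UNIV. \<bar>vt s - v0 s\<bar>)"
  have dist1: "(1 - \<gamma>) * X \<le> \<gamma> * (\<Sum>s\<in>UNIV. vs s * DTV s)"
    unfolding X_def vt_def vs_def DTV_eq
    using visit_dist[OF kernel g0 g1 polth ps_pol dn] by (simp add: abs_minus_commute)
  have "(\<Sum>s\<in>UNIV. vs s * DTV s) \<le> (\<Sum>s\<in>UNIV. vs s * MTV)"
    by (intro sum_mono mult_left_mono DTV_le vsn)
  also have "\<dots> = MTV / (1 - \<gamma>)" using vssum by (simp add: sum_distrib_right[symmetric])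
  finally have hX: "(1 - \<gamma>) * X \<le> \<gamma> * (MTV / (1 - \<gamma>))" using dist1 g0
    by (meson mult_left_mono order_trans)
  have "(1 - \<gamma>) * ((1 - \<gamma>) * X) \<le> (1 - \<gamma>) * (\<gamma> * (MTV / (1 - \<gamma>)))"
    using hX cpos by (intro mult_left_mono) auto
  also have "\<dots> = \<gamma> * MTV" using cpos by (simp add: field_simps)
  finally have "X * (1 - \<gamma>)^2 \<le> \<gamma> * MTV" by (simp add: power2_eq_square mult_ac)
  moreover have "0 < (1 - \<gamma>)^2" using cpos by simp
  ultimately have Xb: "X \<le> \<gamma> * MTV / (1 - \<gamma>)^2" by (simp add: pos_le_divide_eq)
  have gdiff: "(\<Sum>s\<in>UNIV. vs s * g s) - (\<Sum>s\<in>UNIV. vt s * g s) \<le> \<delta> * X"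
  proof -
    have "(\<Sum>s\<in>UNIV. vs s * g s) - (\<Sum>s\<in>UNIV. vt s * g s) = (\<Sum>s\<in>UNIV. (vs s - vt s) * g s)"
      by (simp add: left_diff_distrib sum_subtractf)
    also have "\<dots> \<le> (\<Sum>s\<in>UNIV. \<bar>vt s - vs s\<bar> * \<delta>)"
    proof (rule sum_mono)
      fix s
      have "(vs s - vt s) * g s \<le> \<bar>vt s - vs s\<bar> * g s" using g_nonneg[of s]
        by (intro mult_right_mono) auto
      also have "\<dots> \<le> \<bar>vt s - vs s\<bar> * \<delta>" by (intro mult_left_mono g_le) simp
      finally show "(vs s - vt s) * g s \<le> \<bar>vt s - vs s\<bar> * \<delta>" .
    qed
    also have "\<dots> = \<delta> * X" unfolding X_def sum_distrib_left by (simp add: mult.commute)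
    finally show ?thesis .
  qed
  have dist2: "(1 - \<gamma>) * Y \<le> \<gamma> * (\<Sum>s\<in>UNIV. v0 s * (\<Sum>a\<in>UNIV. \<bar>pi_theta s a - pi0 s a\<bar>))"
    unfolding Y_def vt_def v0_def
    by (rule visit_dist[OF kernel g0 g1 polth pol0 dn])
  have tvb: "(\<Sum>a\<in>UNIV. \<bar>pi_theta s a - pi0 s a\<bar>) \<le> DTV s + \<epsilon>" for s
  proof -
    have "(\<Sum>a\<in>UNIV. \<bar>pi_theta s a - pi0 s a\<bar>) \<le> (\<Sum>a\<in>UNIV. \<bar>ps s a - pi_theta s a\<bar> + \<epsilon> * pi0 s a)"
    proof (rule sum_mono)
      fix a
      have "\<bar>ps s a - pi0 s a\<bar> = \<epsilon> * \<bar>tt s a\<bar> * pi0 s a"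
        unfolding ps_eq using eps p0n[of s a] by (simp add: algebra_simps abs_mult)
      also have "\<dots> \<le> \<epsilon> * pi0 s a" using tt_abs[of s a] eps p0n[of s a]
        by (simp add: mult_left_le_one_le)
      finally have "\<bar>ps s a - pi0 s a\<bar> \<le> \<epsilon> * pi0 s a" .
      then show "\<bar>pi_theta s a - pi0 s a\<bar> \<le> \<bar>ps s a - pi_theta s a\<bar> + \<epsilon> * pi0 s a" by linarith
    qed
    also have "\<dots> = DTV s + \<epsilon>" using p0s[of s] by (simp add: DTV_eq sum.distrib sum_distrib_left[symmetric])
    finally show ?thesis .
  qed
  have "(\<Sum>s\<in>UNIV. v0 s * (\<Sum>a\<in>UNIV. \<bar>pi_theta s a - pi0 s a\<bar>)) \<le> (\<Sum>s\<in>UNIV. v0 s * (DTV s + \<epsilon>))"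
    by (intro sum_mono mult_left_mono tvb v0n)
  also have "\<dots> = J + \<epsilon> / (1 - \<gamma>)" unfolding J_def using v0sum
    by (simp add: algebra_simps sum.distrib sum_distrib_left[symmetric])
  finally have hY: "(1 - \<gamma>) * Y \<le> \<gamma> * (J + \<epsilon> / (1 - \<gamma>))" using dist2 g0
    by (meson mult_left_mono order_trans)
  have cne: "1 - \<gamma> \<noteq> 0" using cpos by simp
  have "Y \<le> \<gamma> * (J + \<epsilon> / (1 - \<gamma>)) / (1 - \<gamma>)" using hY cpos by (simp add: pos_le_divide_eq mult.commute)
  also have "\<dots> = \<gamma> * J / (1 - \<gamma>) + \<gamma> * \<epsilon> / (1 - \<gamma>)^2"
    by (rule alg1[OF cne])
  finally have Yb: "Y \<le> \<gamma> * J / (1 - \<gamma>) + \<gamma> * \<epsilon> / (1 - \<gamma>)^2" .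
  have adiff: "(\<Sum>s\<in>UNIV. vt s * DATV s) - JA \<le> MATV * Y"
  proof -
    have "(\<Sum>s\<in>UNIV. vt s * DATV s) - JA = (\<Sum>s\<in>UNIV. (vt s - v0 s) * DATV s)"
      unfolding JA_def by (simp add: left_diff_distrib sum_subtractf)
    also have "\<dots> \<le> (\<Sum>s\<in>UNIV. \<bar>vt s - v0 s\<bar> * MATV)"
    proof (rule sum_mono)
      fix s
      have "(vt s - v0 s) * DATV s \<le> \<bar>vt s - v0 s\<bar> * DATV s" using DATV_nonneg[of s]
        by (intro mult_right_mono) auto
      also have "\<dots> \<le> \<bar>vt s - v0 s\<bar> * MATV" by (intro mult_left_mono DATV_le) simp
      finally show "(vt s - v0 s) * DATV s \<le> \<bar>vt s - v0 s\<bar> * MATV" .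
    qed
    also have "\<dots> = MATV * Y" unfolding Y_def sum_distrib_left by (simp add: mult.commute)
    finally show ?thesis .
  qed
  have e1: "\<epsilon> * (\<delta> * X) \<le> \<gamma> * \<epsilon> * \<delta> * MTV / (1 - \<gamma>)^2"
  proof -
    have "\<epsilon> * (\<delta> * X) \<le> \<epsilon> * (\<delta> * (\<gamma> * MTV / (1 - \<gamma>)^2))"
      using Xb eps delta_nonneg by (intro mult_left_mono) auto
    then show ?thesis by (simp add: field_simps)
  qed
  have e2: "MATV * Y \<le> \<gamma> * MATV / (1 - \<gamma>) * J + \<gamma> * \<epsilon> * MATV / (1 - \<gamma>)^2"
  proof -
    have "MATV * Y \<le> MATV * (\<gamma> * J / (1 - \<gamma>) + \<gamma> * \<epsilon> / (1 - \<gamma>)^2)"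
      using Yb MATV_nonneg by (intro mult_left_mono) auto
    then show ?thesis by (simp add: field_simps)
  qed
  have Beq: "B = (\<Sum>s\<in>UNIV. vs s * g s)" unfolding B_def' vs_def ps_def g_def tt_def At_def by simp
  have "\<epsilon> * (\<Sum>s\<in>UNIV. vs s * g s) - \<epsilon> * (\<Sum>s\<in>UNIV. vt s * g s) \<le> \<epsilon> * (\<delta> * X)"
    using gdiff eps by (simp add: right_diff_distrib[symmetric])
  then show ?thesis
    using step1 adiff e1 e2 unfolding Beq[symmetric] J_def[symmetric] JA_def[symmetric] MTV_def[symmetric] MATV_def[symmetric] v0_def[symmetric]
    by linarith
qed

end
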